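(* For every $\kappa>0$ there exists a constant $C_\kappa$ such that for all $r>0$ and all $\lambda\ge1$, $$\xi_\lambda(\kappa r)\le C_\kappa\,\xi_\lambda(r),\qquad \vartheta_\lambda(\kappa r)\le C_\kappa\,\vartheta_\lambda(r).$$
   Context: For $\lambda\ge1$ define $m_\lambda(t)=\lambda t^{-5/2}$ for $0<t\le1/2$, $m_\lambda(t)=\lambda\chi(t)$ for $1/2<t\le1$, $m_\lambda(t)=\lambda t^{-3/2}$ for $t>1$, where $\chi$ is a $C^1$ decreasing convex function on $[1/2,1]$ chosen so that $m_\lambda$ is a $C^1$ decreasing bijection of $(0,\infty)$ onto itself; and $\mu_\lambda(t)=\lambda t^{-5/2}$ for $0<t\le1/2$, $\mu_\lambda(t)=\lambda\tilde\chi(t)$ for $1/2<t\le1$, $\mu_\lambda(t)=\lambda t^{-1/2}$ for $t>1$, with $\tilde\chi$ a $C^1$ decreasing convex function chosen so that $\mu_\lambda$ is $C^1$ on $(0,\infty)$. Set $\xi_\lambda(r)=-m_\lambda'(m_\lambda^{-1}(r))$ and $\vartheta_\lambda(r)=-\mu_\lambda'(\mu_\lambda^{-1}(r))$ for $r>0$. *)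

theory Defs
  imports "HOL-Analysis.Analysis"
begin

definition mfun :: "(real \<Rightarrow> real) \<Rightarrow> real \<Rightarrow> real \<Rightarrow> real" where
  "mfun chi lam t =
     (if t \<le> 1/2 then lam * t powr (-5/2)
      else if t \<le> 1 then lam * chi t
      else lam * t powr (-3/2))"

definition mufun :: "(real \<Rightarrow> real) \<Rightarrow> real \<Rightarrow> real \<Rightarrow> real" where
  "mufun chi lam t =
     (if t \<le> 1/2 then lam * t powr (-5/2)
      else if t \<le> 1 then lam * chi t
      else lam * t powr (-1/2))"

definition xi :: "(real \<Rightarrow> real) \<Rightarrow> real \<Rightarrow> real \<Rightarrow> real" where
  "xi chi lam r = - deriv (mfun chi lam) (inv_into {0<..} (mfun chi lam) r)"

definition vartheta :: "(real \<Rightarrow> real) \<Rightarrow> real \<Rightarrow> real \<Rightarrow> real" where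
  "vartheta chi lam r = - deriv (mufun chi lam) (inv_into {0<..} (mufun chi lam) r)"

end

theory Submission
  imports Defs
begin

lemma tangent_right:
  fixes f :: "real \<Rightarrow> real"
  assumes cv: "convex_on I f" and xy: "x \<in> I" "y \<in> I" "x < y"
    and d: "(f has_real_derivative D) (at x)"
  shows "D \<le> (f y - f x) / (y - x)"
proof -
  have "((\<lambda>u. (f u - f x) / (u - x)) \<longlongrightarrow> D) (at_right x)"
    using has_field_derivative_at_within[OF d, of "{x<..}"] by (simp add: has_field_derivative_iff)
  moreover have "eventually (\<lambda>u. (f u - f x) / (u - x) \<le> (f y - f x) / (y - x)) (at_right x)"
    using eventually_at_right_real[OF xy(3)]
  proof (rule eventually_mono)
    fix u assume u: "u \<in> {x<..<y}"
    have "(f x - f u) / (x - u) \<le> (f x - f y) / (x - y)"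
      using convex_on_slope_le(1)[OF cv xy(1,2), of u] u by auto
    moreover have "(f x - f u) / (x - u) = (f u - f x) / (u - x)" "(f x - f y) / (x - y) = (f y - f x) / (y - x)"
      by (metis minus_diff_eq minus_divide_divide)+
    ultimately show "(f u - f x) / (u - x) \<le> (f y - f x) / (y - x)" by simp
  qed
  ultimately show ?thesis
    by (rule tendsto_upperbound) (simp add: trivial_limit_at_right_real)
qed

lemma tangent_left:
  fixes f :: "real \<Rightarrow> real"
  assumes cv: "convex_on I f" and xy: "x \<in> I" "y \<in> I" "x < y"
    and d: "(f has_real_derivative D) (at y)"
  shows "(f y - f x) / (y - x) \<le> D"
proof -
  have "((\<lambda>u. (f u - f y) / (u - y)) \<longlongrightarrow> D) (at_left y)"
    using has_field_derivative_at_within[OF d, of "{..<y}"] by (simp add: has_field_derivative_iff)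
  moreover have "eventually (\<lambda>u. (f y - f x) / (y - x) \<le> (f u - f y) / (u - y)) (at_left y)"
    using eventually_at_left_real[OF xy(3)]
  proof (rule eventually_mono)
    fix u assume u: "u \<in> {x<..<y}"
    have "(f x - f y) / (x - y) \<le> (f u - f y) / (u - y)"
      using convex_on_slope_le(2)[OF cv xy(1,2), of u] u by auto
    moreover have "(f x - f y) / (x - y) = (f y - f x) / (y - x)"
      by (metis minus_diff_eq minus_divide_divide)+
    ultimately show "(f y - f x) / (y - x) \<le> (f u - f y) / (u - y)" by simp
  qed
  ultimately show ?thesis
    by (rule tendsto_lowerbound) (simp add: trivial_limit_at_left_real)
qed

lemma lim_eq:
  fixes D g :: "real \<Rightarrow> real"
  assumes "isCont D c" "isCont g c" "eventually (\<lambda>x. D x = g x) F" "F \<le> at c" "F \<noteq> bot"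
  shows "D c = g c"
proof -
  have "(D \<longlongrightarrow> D c) F" using assms(1,4) isCont_def tendsto_mono by blast
  moreover have "(g \<longlongrightarrow> g c) F" using assms(2,4) isCont_def tendsto_mono by blast
  hence "(D \<longlongrightarrow> g c) F" using tendsto_cong[OF assms(3)] by simp
  ultimately show ?thesis using tendsto_unique assms(5) by blast
qed

lemma sandwich: fixes A c B x :: real
  shows "A \<le> c \<Longrightarrow> c \<le> B \<Longrightarrow> 0 \<le> x \<Longrightarrow> A * x \<le> c * x \<and> c * x \<le> B * x"
  by (simp add: mult_right_mono)

lemma core:
  fixes M chi :: "real \<Rightarrow> real" and b :: real
  assumes Mdef: "\<And>t. M t = (if t \<le> 1/2 then t powr (-5/2) else if t \<le> 1 then chi t else t powr (-b))"
    and b: "0 < b" "b \<le> 5/2"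
    and cv: "convex_on {1/2..1} chi" and dec: "antimono_on {1/2..1} chi"
    and C1: "M C1_differentiable_on {0<..}"
  shows "\<exists>A>0. \<exists>B>0. \<forall>t>0. A * min (M t powr ((b+1)/b)) (M t powr (7/5)) \<le> - deriv M t \<and>
            - deriv M t \<le> B * min (M t powr ((b+1)/b)) (M t powr (7/5))"
    and "\<forall>s>0. \<exists>t>0. M t = s"
    and "\<forall>t>0. M field_differentiable at t"
    and "\<forall>t>0. M t > 0"
proof -
  obtain D where D: "\<And>x. x > 0 \<Longrightarrow> (M has_real_derivative D x) (at x)"
    and Dc: "continuous_on {0<..} D"
    using C1 unfolding C1_differentiable_on_def has_real_derivative_iff_has_vector_derivative by auto
  have two: "(1::real) < 2" by simp
  have dD: "t > 0 \<Longrightarrow> deriv M t = D t" for t using D DERIV_imp_deriv by blast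
  show fd: "\<forall>t>0. M field_differentiable at t" using D field_differentiable_def by blast
  have Mc: "continuous_on {0<..} M"
    by (intro continuous_at_imp_continuous_on ballI DERIV_isCont) (use D in auto)
  have DisC: "t > 0 \<Longrightarrow> isCont D t" for t
    using Dc continuous_on_eq_continuous_at[of "{0<..}" D] by (simp add: open_greaterThan)
  have MisC: "t > 0 \<Longrightarrow> isCont M t" for t
    using Mc continuous_on_eq_continuous_at[of "{0<..}" M] by (simp add: open_greaterThan)
  have Dlow: "D t = -(5/2) * t powr (-7/2)" if t: "0 < t" "t < 1/2" for t
  proof -
    have "((\<lambda>x. x powr (-5/2)) has_real_derivative D t) (at t)"
      by (rule has_field_derivative_transform_within_open[OF D[of t], of "{0<..<1/2}"]) (use t in \<open>auto simp: Mdef\<close>)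
    moreover have "((\<lambda>x. x powr (-5/2)) has_real_derivative (-5/2) * t powr (-5/2 - 1)) (at t)"
      by (rule has_real_derivative_powr) (use t in auto)
    ultimately show ?thesis using DERIV_unique by fastforce
  qed
  have Dhigh: "D t = -b * t powr (-b-1)" if t: "1 < t" for t
  proof -
    have "((\<lambda>x. x powr (-b)) has_real_derivative D t) (at t)"
      by (rule has_field_derivative_transform_within_open[OF D[of t], of "{1<..}"]) (use t in \<open>auto simp: Mdef\<close>)
    moreover have "((\<lambda>x. x powr (-b)) has_real_derivative (-b) * t powr (-b - 1)) (at t)"
      by (rule has_real_derivative_powr) (use t in auto)
    ultimately show ?thesis using DERIV_unique by fastforce
  qed
  have Dhalf: "D (1/2) = -(5/2) * (1/2) powr (-7/2)"
  proof (rule lim_eq[where F="at_left (1/2)" and g="\<lambda>t. -(5/2) * t powr (-7/2)"])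
    show "isCont D (1/2)" by (rule DisC) simp
    show "isCont (\<lambda>t. -(5/2) * t powr (-7/2)) (1/2::real)" by (intro continuous_intros) auto
    show "\<forall>\<^sub>F x in at_left (1/2). D x = -(5/2) * x powr (-7/2)"
      using eventually_at_left_real[of 0 "1/2::real", OF half_gt_zero[OF zero_less_one]] proof (rule eventually_mono)
        fix x :: real assume "x \<in> {0<..<1/2}" then show "D x = -(5/2) * x powr (-7/2)" by (intro Dlow) auto
      qed
  qed (auto simp: at_le trivial_limit_at_left_real)
  have D1: "D 1 = -b"
  proof -
    have "D 1 = -b * 1 powr (-b-1)"
    proof (rule lim_eq[where F="at_right 1" and g="\<lambda>t. -b * t powr (-b-1)"])
      show "isCont D 1" by (rule DisC) simp
      show "isCont (\<lambda>t. -b * t powr (-b-1)) (1::real)" by (intro continuous_intros) auto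
      show "\<forall>\<^sub>F x in at_right 1. D x = -b * x powr (-b-1)"
        using eventually_at_right_real[of 1 "2::real", OF two] proof (rule eventually_mono)
        fix x :: real assume "x \<in> {1<..<2}" then show "D x = -b * x powr (-b-1)" by (intro Dhigh) auto
      qed
    qed (auto simp: at_le trivial_limit_at_right_real)
    thus ?thesis by simp
  qed
  have M1: "M 1 = 1"
  proof -
    have "M 1 = 1 powr (-b)"
    proof (rule lim_eq[where F="at_right 1" and g="\<lambda>t. t powr (-b)"])
      show "isCont M 1" by (rule MisC) simp
      show "isCont (\<lambda>t. t powr (-b)) (1::real)" by (intro continuous_intros) auto
      show "\<forall>\<^sub>F x in at_right 1. M x = x powr (-b)"
        using eventually_at_right_real[of 1 "2::real", OF two] by (rule eventually_mono) (auto simp: Mdef)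
    qed (auto simp: at_le trivial_limit_at_right_real)
    thus ?thesis by simp
  qed

  have eqM: "\<And>x. x \<in> {1/2<..1} \<Longrightarrow> M x = chi x" by (simp add: Mdef)
  have cvM: "convex_on {1/2<..1} M"
  proof -
    have c: "convex_on {1/2<..1} chi" by (rule convex_on_subset[OF cv]) auto
    show ?thesis unfolding convex_on_def
    proof (intro conjI ballI allI impI)
      show "convex {1/2<..1::real}" by simp
      fix x y u v :: real assume xy: "x \<in> {1/2<..1}" "y \<in> {1/2<..1}" and uv: "0 \<le> u" "0 \<le> v" "u + v = 1"
      have "u *\<^sub>R x + v *\<^sub>R y \<in> {1/2<..1}"
        using convexD[of "{1/2<..1::real}" x y u v] xy uv by simp
      then show "M (u *\<^sub>R x + v *\<^sub>R y) \<le> u * M x + v * M y"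
        using c[unfolded convex_on_def] xy uv eqM by auto
    qed
  qed
  have Dmid: "D t \<le> -b" if t: "1/2 < t" "t \<le> 1" for t
  proof (cases "t = 1")
    case True then show ?thesis using D1 by simp
  next
    case False
    with t have t1: "t < 1" by simp
    have "D t \<le> (M 1 - M t) / (1 - t)"
      by (rule tangent_right[OF cvM _ _ t1 D]) (use t t1 in auto)
    also have "\<dots> \<le> D 1"
      by (rule tangent_left[OF cvM _ _ t1 D]) (use t t1 in auto)
    finally show ?thesis using D1 by simp
  qed
  obtain H where H: "\<And>x. x \<in> {1/2..1} \<Longrightarrow> \<bar>D x\<bar> \<le> H"
  proof -
    have "bounded (D ` {1/2..1})"
      by (rule compact_imp_bounded[OF compact_continuous_image[OF continuous_on_subset[OF Dc] compact_Icc]]) auto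
    then show ?thesis using that unfolding bounded_real by blast
  qed
  obtain S where S: "\<And>x. x \<in> {1/2..1} \<Longrightarrow> \<bar>M x\<bar> \<le> S"
  proof -
    have "bounded (M ` {1/2..1})"
      by (rule compact_imp_bounded[OF compact_continuous_image[OF continuous_on_subset[OF Mc] compact_Icc]]) auto
    then show ?thesis using that unfolding bounded_real by blast
  qed
  have Mmid: "1 \<le> M t" if t: "1/2 < t" "t \<le> 1" for t
  proof -
    have "chi 1 \<le> chi t" using dec t unfolding monotone_on_def by auto
    then show ?thesis using M1 t by (simp add: Mdef split: if_splits)
  qed
  define p where "p = (b+1)/b"
  have p: "7/5 \<le> p" using b unfolding p_def by (simp add: field_simps)
  define F where "F s = min (s powr p) (s powr (7/5))" for s :: real
  define K where "K = max 1 (S powr (7/5))"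
  have K: "K \<ge> 1" unfolding K_def by simp
  define A where "A = b / K"
  define B where "B = max (5/2) H"
  have Fge1: "s \<ge> 1 \<Longrightarrow> F s = s powr (7/5)" for s
    unfolding F_def using powr_mono[OF p, of s] by simp
  have Fle1: "0 < s \<Longrightarrow> s \<le> 1 \<Longrightarrow> F s = s powr p" for s
    unfolding F_def using powr_mono'[OF p, of s] by simp
  have bounds: "A * F (M t) \<le> - D t \<and> - D t \<le> B * F (M t)" if t: "t > 0" for t
  proof -
    consider "t \<le> 1/2" | "1/2 < t \<and> t \<le> 1" | "1 < t" by linarith
    then show ?thesis
    proof cases
      case 1
      have Dt: "D t = -(5/2) * t powr (-7/2)"
      proof (cases "t = 1/2")
        case True then show ?thesis using Dhalf by (simp only: True)
      next
        case False then show ?thesis using Dlow[OF t] 1 by simp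
      qed
      have Mt: "M t = t powr (-5/2)" using 1 by (simp add: Mdef)
      have "1 \<le> t powr (-5/2)"
      proof -
        have "t powr (5/2) \<le> 1" by (rule powr_le1) (use t 1 in auto)
        moreover have "0 < t powr (5/2)" using t by simp
        ultimately show ?thesis by (simp add: powr_minus one_le_inverse)
      qed
      then have FM: "F (M t) = t powr (-7/2)" using Mt Fge1 by (simp add: powr_powr)
      have "A \<le> 5/2" unfolding A_def using b K by (simp add: divide_le_eq)
      moreover have "5/2 \<le> B" unfolding B_def by simp
      moreover have "0 \<le> t powr (-7/2)" by simp
      ultimately have "A * t powr (-7/2) \<le> (5/2) * t powr (-7/2) \<and> (5/2) * t powr (-7/2) \<le> B * t powr (-7/2)"
        by (rule sandwich)
      then show ?thesis using Dt FM by simp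
    next
      case 2
      have Mt1: "1 \<le> M t" using Mmid 2 by auto
      have MS: "M t \<le> S" using S[of t] 2 by auto
      have FM: "F (M t) = M t powr (7/5)" using Fge1 Mt1 by simp
      have F1: "1 \<le> F (M t)" using FM Mt1 by (simp add: ge_one_powr_ge_zero)
      have FK: "F (M t) \<le> K"
        unfolding FM K_def using powr_mono2[of "7/5" "M t" S] Mt1 MS by simp
      have "A * F (M t) \<le> A * K" using FK b K unfolding A_def by (intro mult_left_mono) auto
      also have "\<dots> = b" unfolding A_def using K by simp
      also have "\<dots> \<le> - D t" using Dmid[of t] 2 by linarith
      finally have l: "A * F (M t) \<le> - D t" .
      have "- D t \<le> H" using H[of t] 2 by auto
      also have "\<dots> \<le> B" unfolding B_def by simp
      also have "\<dots> \<le> B * F (M t)" using F1 unfolding B_def by (simp add: mult_le_cancel_left1)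
      finally show ?thesis using l by simp
    next
      case 3
      have Dt: "D t = -b * t powr (-b-1)" using Dhigh 3 by simp
      have Mt: "M t = t powr (-b)" using 3 by (simp add: Mdef)
      have "1 \<le> t powr b" using 3 b by (simp add: ge_one_powr_ge_zero)
      then have Mle: "t powr (-b) \<le> 1" by (simp add: powr_minus inverse_le_1_iff)
      have bp: "- (b * p) = -b - 1" unfolding p_def using b by (simp add: field_simps)
      have FM: "F (M t) = t powr (-b-1)"
        using Fle1[of "t powr (-b)"] Mle 3 Mt by (simp add: powr_powr bp)
      have "A \<le> b" unfolding A_def using b K by (simp add: divide_le_eq)
      moreover have "b \<le> B" unfolding B_def using b by simp
      moreover have "0 \<le> t powr (-b-1)" by simp
      ultimately have "A * t powr (-b-1) \<le> b * t powr (-b-1) \<and> b * t powr (-b-1) \<le> B * t powr (-b-1)"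
        by (rule sandwich)
      then show ?thesis using Dt FM by simp
    qed
  qed
  show "\<exists>A>0. \<exists>B>0. \<forall>t>0. A * min (M t powr ((b+1)/b)) (M t powr (7/5)) \<le> - deriv M t \<and>
            - deriv M t \<le> B * min (M t powr ((b+1)/b)) (M t powr (7/5))"
  proof (intro exI conjI allI impI)
    show "A > 0" unfolding A_def using b K by simp
    show "B > 0" unfolding B_def by simp
    fix t :: real assume t: "t > 0"
    show "A * min (M t powr ((b+1)/b)) (M t powr (7/5)) \<le> - deriv M t"
      using bounds[OF t] dD[OF t] unfolding F_def p_def by simp
    show "- deriv M t \<le> B * min (M t powr ((b+1)/b)) (M t powr (7/5))"
      using bounds[OF t] dD[OF t] unfolding F_def p_def by simp
  qed
  show "\<forall>t>0. M t > 0"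
  proof (intro allI impI)
    fix t :: real assume t: "t > 0"
    consider "t \<le> 1/2" | "1/2 < t \<and> t \<le> 1" | "1 < t" by linarith
    then show "M t > 0"
    proof cases
      case 2 then show ?thesis using Mmid[of t] by simp
    qed (use t in \<open>auto simp: Mdef\<close>)
  qed
  show "\<forall>s>0. \<exists>t>0. M t = s"
  proof (intro allI impI)
    fix s :: real assume s: "s > 0"
    consider "s < 1" | "1 \<le> s \<and> s \<le> 2 powr (5/2)" | "2 powr (5/2) < s" by linarith
    then show "\<exists>t>0. M t = s"
    proof cases
      case 1
      define t where "t = s powr (-1/b)"
      have "s powr (1/b) < 1 powr (1/b)" using s 1 b by (intro powr_less_mono2) auto
      then have "s powr (1/b) < 1" by simp
      moreover have "0 < s powr (1/b)" using s by simp
      ultimately have "1 < t" unfolding t_def using s 1 b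
        by (simp add: powr_minus one_less_inverse)
      moreover have "M t = s" using \<open>1 < t\<close> s b unfolding Mdef t_def by (simp add: powr_powr)
      ultimately show ?thesis by (intro exI[of _ t]) auto
    next
      case 3
      define t where "t = s powr (-2/5)"
      have "s powr (2/5) > (2 powr (5/2)) powr (2/5)" using 3 by (intro powr_less_mono2) auto
      then have "s powr (2/5) > 2" by (simp add: powr_powr)
      then have "t < 1/2" unfolding t_def using s by (simp add: powr_minus inverse_less_iff_less divide_simps)
      moreover have "t > 0" unfolding t_def using s by simp
      moreover have "M t = s" using \<open>t < 1/2\<close> s unfolding Mdef t_def by (simp add: powr_powr)
      ultimately show ?thesis by (intro exI[of _ t]) auto
    next
      case 2
      have Mh: "M (1/2) = 2 powr (5/2)" by (simp add: Mdef powr_minus powr_divide)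
      have cM: "continuous_on {1/2..1} M" by (rule continuous_on_subset[OF Mc]) auto
      obtain t where "1/2 \<le> t" "t \<le> 1" "M t = s"
        using IVT2'[of M 1 s "1/2", OF _ _ _ cM] 2 M1 Mh by auto
      then show ?thesis by (intro exI[of _ t]) auto
    qed
  qed
qed
lemma min_scale: fixes a1 a2 u v :: real
  assumes "0 \<le> a1" "0 \<le> a2" "0 \<le> u" "0 \<le> v"
  shows "min (a1 * u) (a2 * v) \<le> max a1 a2 * min u v"
proof (cases "u \<le> v")
  case True
  then have "min (a1 * u) (a2 * v) \<le> a1 * u" by simp
  also have "\<dots> \<le> max a1 a2 * u" using assms by (intro mult_right_mono) auto
  finally show ?thesis using True by simp
next
  case False
  then have "min (a1 * u) (a2 * v) \<le> a2 * v" by simp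
  also have "\<dots> \<le> max a1 a2 * v" using assms by (intro mult_right_mono) auto
  finally show ?thesis using False by simp
qed

lemma final:
  fixes M :: "real \<Rightarrow> real" and p q \<kappa> A B :: real
  assumes surj: "\<forall>s>0. \<exists>t>0. M t = s" and fd: "\<forall>t>0. M field_differentiable at t"
    and A: "A > 0" and B: "B > 0"
    and AB: "\<forall>t>0. A * min (M t powr p) (M t powr q) \<le> - deriv M t \<and>
                   - deriv M t \<le> B * min (M t powr p) (M t powr q)"
    and k: "\<kappa> > 0"
  shows "\<exists>C\<ge>0. \<forall>r>0. \<forall>lam\<ge>1.
     - deriv (\<lambda>t. lam * M t) (inv_into {0<..} (\<lambda>t. lam * M t) (\<kappa> * r))
       \<le> C * - deriv (\<lambda>t. lam * M t) (inv_into {0<..} (\<lambda>t. lam * M t) r)"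
    and "\<forall>r>0. \<forall>lam\<ge>1. 0 \<le> - deriv (\<lambda>t. lam * M t) (inv_into {0<..} (\<lambda>t. lam * M t) r)"
proof -
  define F where "F s = min (s powr p) (s powr q)" for s :: real
  define Kk where "Kk = max (\<kappa> powr p) (\<kappa> powr q)"
  have F0: "0 \<le> F s" for s unfolding F_def by simp
  have FK: "F (\<kappa> * y) \<le> Kk * F y" if y: "y > 0" for y
    unfolding F_def Kk_def using k y by (simp add: powr_mult min_scale)
  have key: "lam * A * F (x / lam) \<le> - deriv (\<lambda>t. lam * M t) (inv_into {0<..} (\<lambda>t. lam * M t) x)
      \<and> - deriv (\<lambda>t. lam * M t) (inv_into {0<..} (\<lambda>t. lam * M t) x) \<le> lam * B * F (x / lam)"
    if x: "x > 0" and lam: "lam > 0" for x lam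
  proof -
    obtain t0 where t0: "t0 > 0" "M t0 = x / lam" using surj x lam by (meson divide_pos_pos)
    have xin: "x \<in> (\<lambda>t. lam * M t) ` {0<..}"
      using t0 lam by (intro image_eqI[of _ _ t0]) auto
    define t where "t = inv_into {0<..} (\<lambda>t. lam * M t) x"
    have t: "t > 0" unfolding t_def using inv_into_into[OF xin] by simp
    have "lam * M t = x" unfolding t_def using f_inv_into_f[OF xin] by simp
    then have Mt: "M t = x / lam" using lam by (simp add: field_simps)
    have dt: "deriv (\<lambda>t. lam * M t) t = lam * deriv M t"
      using fd t by (simp add: deriv_cmult)
    have "A * F (x / lam) \<le> - deriv M t \<and> - deriv M t \<le> B * F (x / lam)"
      using AB t Mt unfolding F_def by auto
    then have "lam * (A * F (x / lam)) \<le> lam * (- deriv M t) \<and> lam * (- deriv M t) \<le> lam * (B * F (x / lam))"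
      using lam by (intro conjI mult_left_mono) auto
    then show ?thesis unfolding t_def[symmetric] dt
      by (simp add: mult.assoc del: mult_minus_right)
  qed
  show "\<forall>r>0. \<forall>lam\<ge>1. 0 \<le> - deriv (\<lambda>t. lam * M t) (inv_into {0<..} (\<lambda>t. lam * M t) r)"
  proof (intro allI impI)
    fix r lam :: real assume r: "r > 0" and lam: "lam \<ge> 1"
    have "0 \<le> lam * A * F (r / lam)" using lam A F0 by simp
    then show "0 \<le> - deriv (\<lambda>t. lam * M t) (inv_into {0<..} (\<lambda>t. lam * M t) r)"
      using key[of r lam] r lam by simp
  qed
  have Kk0: "0 \<le> Kk" unfolding Kk_def by (simp add: le_max_iff_disj)
  show "\<exists>C\<ge>0. \<forall>r>0. \<forall>lam\<ge>1.
     - deriv (\<lambda>t. lam * M t) (inv_into {0<..} (\<lambda>t. lam * M t) (\<kappa> * r))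
       \<le> C * - deriv (\<lambda>t. lam * M t) (inv_into {0<..} (\<lambda>t. lam * M t) r)"
  proof (intro exI conjI allI impI)
    show "0 \<le> B * Kk / A" using A B Kk0 by simp
  next
    fix r lam :: real assume r: "r > 0" and lam: "lam \<ge> 1"
    have l0: "lam > 0" using lam by simp
    let ?X = "\<lambda>x. - deriv (\<lambda>t. lam * M t) (inv_into {0<..} (\<lambda>t. lam * M t) x)"
    have fk: "F (\<kappa> * r / lam) \<le> Kk * F (r / lam)" using FK[of "r / lam"] r l0 by simp
    have Kk0: "0 \<le> Kk" unfolding Kk_def by (simp add: le_max_iff_disj)
    have "?X (\<kappa> * r) \<le> lam * B * F (\<kappa> * r / lam)" using key[of "\<kappa> * r" lam] k r l0 by simp
    also have "\<dots> \<le> lam * B * (Kk * F (r / lam))"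
      using l0 B fk by (intro mult_left_mono) auto
    also have "\<dots> = (B * Kk / A) * (lam * A * F (r / lam))" using A by (simp add: field_simps)
    also have "\<dots> \<le> (B * Kk / A) * ?X r"
    proof (rule mult_left_mono)
      show "lam * A * F (r / lam) \<le> ?X r" using key[of r lam] r l0 by simp
      show "0 \<le> B * Kk / A" using A B Kk0 by simp
    qed
    finally show "?X (\<kappa> * r) \<le> (B * Kk / A) * ?X r" .
  qed
qed


theorem lemmaB1:
  fixes chi chit :: "real \<Rightarrow> real"
  assumes chi_convex: "convex_on {1/2..1} chi"
    and chi_decr: "antimono_on {1/2..1} chi"
    and m_C1: "\<And>lam. lam \<ge> 1 \<Longrightarrow> mfun chi lam C1_differentiable_on {0<..}"
    and m_decr: "\<And>lam. lam \<ge> 1 \<Longrightarrow> antimono_on {0<..} (mfun chi lam)"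
    and m_bij: "\<And>lam. lam \<ge> 1 \<Longrightarrow> bij_betw (mfun chi lam) {0<..} {0<..}"
    and chit_convex: "convex_on {1/2..1} chit"
    and chit_decr: "antimono_on {1/2..1} chit"
    and mu_C1: "\<And>lam. lam \<ge> 1 \<Longrightarrow> mufun chit lam C1_differentiable_on {0<..}"
  shows "\<forall>\<kappa>>0. \<exists>C. \<forall>r>0. \<forall>lam\<ge>1.
           xi chi lam (\<kappa> * r) \<le> C * xi chi lam r \<and>
           vartheta chit lam (\<kappa> * r) \<le> C * vartheta chit lam r"
proof (intro allI impI)
  fix \<kappa> :: real assume k: "\<kappa> > 0"
  have mf: "\<And>lam. mfun chi lam = (\<lambda>t. lam * mfun chi 1 t)" by (auto simp: mfun_def fun_eq_iff)
  have muf: "\<And>lam. mufun chit lam = (\<lambda>t. lam * mufun chit 1 t)" by (auto simp: mufun_def fun_eq_iff)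
  have cm: "\<And>t. mfun chi 1 t = (if t \<le> 1/2 then t powr (-5/2) else if t \<le> 1 then chi t else t powr (-(3/2)))"
    by (simp add: mfun_def)
  have cmu: "\<And>t. mufun chit 1 t = (if t \<le> 1/2 then t powr (-5/2) else if t \<le> 1 then chit t else t powr (-(1/2)))"
    by (simp add: mufun_def)
  note c1 = core[OF cm _ _ chi_convex chi_decr m_C1[of 1]]
  note c2 = core[OF cmu _ _ chit_convex chit_decr mu_C1[of 1]]
  obtain A1 B1 where AB1: "A1 > 0" "B1 > 0"
    "\<forall>t>0. A1 * min (mfun chi 1 t powr ((3/2+1)/(3/2))) (mfun chi 1 t powr (7/5)) \<le> - deriv (mfun chi 1) t \<and>
            - deriv (mfun chi 1) t \<le> B1 * min (mfun chi 1 t powr ((3/2+1)/(3/2))) (mfun chi 1 t powr (7/5))"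
    using c1(1) by auto
  obtain A2 B2 where AB2: "A2 > 0" "B2 > 0"
    "\<forall>t>0. A2 * min (mufun chit 1 t powr ((1/2+1)/(1/2))) (mufun chit 1 t powr (7/5)) \<le> - deriv (mufun chit 1) t \<and>
            - deriv (mufun chit 1) t \<le> B2 * min (mufun chit 1 t powr ((1/2+1)/(1/2))) (mufun chit 1 t powr (7/5))"
    using c2(1) by auto
  obtain C1 where C1: "C1 \<ge> 0" "\<forall>r>0. \<forall>lam\<ge>1.
     - deriv (\<lambda>t. lam * mfun chi 1 t) (inv_into {0<..} (\<lambda>t. lam * mfun chi 1 t) (\<kappa> * r))
       \<le> C1 * - deriv (\<lambda>t. lam * mfun chi 1 t) (inv_into {0<..} (\<lambda>t. lam * mfun chi 1 t) r)"
    using final(1)[OF _ _ AB1 k] c1(2,3) by auto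
  have N1: "\<forall>r>0. \<forall>lam\<ge>1. 0 \<le> - deriv (\<lambda>t. lam * mfun chi 1 t) (inv_into {0<..} (\<lambda>t. lam * mfun chi 1 t) r)"
    using final(2)[OF _ _ AB1 k] c1(2,3) by auto
  obtain C2 where C2: "C2 \<ge> 0" "\<forall>r>0. \<forall>lam\<ge>1.
     - deriv (\<lambda>t. lam * mufun chit 1 t) (inv_into {0<..} (\<lambda>t. lam * mufun chit 1 t) (\<kappa> * r))
       \<le> C2 * - deriv (\<lambda>t. lam * mufun chit 1 t) (inv_into {0<..} (\<lambda>t. lam * mufun chit 1 t) r)"
    using final(1)[OF _ _ AB2 k] c2(2,3) by auto
  have N2: "\<forall>r>0. \<forall>lam\<ge>1. 0 \<le> - deriv (\<lambda>t. lam * mufun chit 1 t) (inv_into {0<..} (\<lambda>t. lam * mufun chit 1 t) r)"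
    using final(2)[OF _ _ AB2 k] c2(2,3) by auto
  show "\<exists>C. \<forall>r>0. \<forall>lam\<ge>1.
           xi chi lam (\<kappa> * r) \<le> C * xi chi lam r \<and>
           vartheta chit lam (\<kappa> * r) \<le> C * vartheta chit lam r"
  proof (intro exI allI impI conjI)
    fix r lam :: real assume r: "r > 0" and lam: "lam \<ge> 1"
    have x0: "0 \<le> xi chi lam r" using N1 r lam unfolding xi_def mf[of lam] by auto
    have "xi chi lam (\<kappa> * r) \<le> C1 * xi chi lam r" using C1 r lam unfolding xi_def mf[of lam] by auto
    also have "\<dots> \<le> max C1 C2 * xi chi lam r" using x0 by (intro mult_right_mono) auto
    finally show "xi chi lam (\<kappa> * r) \<le> max C1 C2 * xi chi lam r" .
    have v0: "0 \<le> vartheta chit lam r" using N2 r lam unfolding vartheta_def muf[of lam] by auto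
    have "vartheta chit lam (\<kappa> * r) \<le> C2 * vartheta chit lam r" using C2 r lam unfolding vartheta_def muf[of lam] by auto
    also have "\<dots> \<le> max C1 C2 * vartheta chit lam r" using v0 by (intro mult_right_mono) auto
    finally show "vartheta chit lam (\<kappa> * r) \<le> max C1 C2 * vartheta chit lam r" .
  qed
qed

end
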